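(* The critically marked moduli space $\mathcal M_2^{\mathrm{cm}}$ has the homotopy type of the $2$-sphere. More precisely, the map $\mathcal M_2^{\mathrm{cm}}\to\hat{\mathbf C}$ given by $(\alpha,\beta,\gamma,\delta)\mapsto\alpha^3/\gamma=B/(A-1)=A^3/C$ is a smooth surjection each of whose fibers is isomorphic to $\mathbf C$, and the topological $2$-sphere $$\{(A,B,C):\ 0\le A\le1,\ |B|=\sqrt{A^3(1-A)},\ C=-\bar B\}$$ is embedded in $\mathcal M_2^{\mathrm{cm}}$ as a deformation retract and maps homeomorphically onto $\hat{\mathbf C}$.
   Context: A critically marked quadratic rational map is $(f,\omega_1,\omega_2)$ with $f$ a holomorphic degree-$2$ self-map of the Riemann sphere and $\omega_1\neq\omega_2$ its critical points; $\mathcal M_2^{\mathrm{cm}}$ is the set of Möbius conjugacy classes of such triples. Each class has a representative $(f,0,\infty)$ with $f(z)=(\alpha z^2+\beta)/(\gamma z^2+\delta)$, $\alpha\delta-\beta\gamma=1$, unique up to $(\alpha,\beta,\gamma,\delta)\mapsto(\alpha\lambda,\beta\lambda^{-3},\gamma\lambda^3,\delta\lambda^{-1})$; with $A=\alpha\delta$, $B=\alpha^3\beta$, $C=\gamma\delta^3$, $\mathcal M_2^{\mathrm{cm}}$ is identified with the surface $W=\{(A,B,C)\in\mathbf C^3: A^3(A-1)=BC\}$ with its induced topology. *)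

theory Defs
  imports "HOL-Analysis.Analysis"
begin

type_synonym pt = "complex \<times> complex \<times> complex"

text \<open>The surface W = {(A,B,C) : A^3 (A - 1) = B C}, identified with the critically
  marked moduli space.\<close>
definition W :: "pt set" where
  "W = {(A,B,C). A^3 * (A - 1) = B * C}"

text \<open>The Riemann sphere as complex option (None = infinity) with the one-point
  compactification (Alexandroff) topology.\<close>
definition riemann_sphere :: "complex option topology" where
  "riemann_sphere = topology (\<lambda>U. open {z. Some z \<in> U} \<and> (None \<in> U \<longrightarrow> compact {z. Some z \<notin> U}))"

definition Phi :: "pt \<Rightarrow> complex option" where
  "Phi p = (case p of (A,B,C) \<Rightarrow>
      if A \<noteq> 1 then Some (B / (A - 1))
      else if C \<noteq> 0 then Some (A^3 / C) else None)"

definition S2 :: "pt set" where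
  "S2 = {(A,B,C). A \<in> \<real> \<and> 0 \<le> Re A \<and> Re A \<le> 1 \<and>
          cmod B = sqrt (Re A ^ 3 * (1 - Re A)) \<and> C = - cnj B}"

definition holo3 :: "(pt \<Rightarrow> complex) \<Rightarrow> pt set \<Rightarrow> bool" where
  "holo3 f U \<longleftrightarrow> open U \<and> (\<forall>x\<in>U. \<exists>L. (f has_derivative L) (at x) \<and>
      (\<forall>c a b d. L (c * a, c * b, c * d) = c * L (a, b, d)))"

text \<open>A map from X (a subset of C^3) to the Riemann sphere is smooth (holomorphic) if,
  near every point, in the standard chart of the sphere (z near finite values,
  1/z near infinity) it is the restriction of a holomorphic function on an open
  subset of C^3.\<close>
definition holo_to_sphere :: "(pt \<Rightarrow> complex option) \<Rightarrow> pt set \<Rightarrow> bool" where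
  "holo_to_sphere F X \<longleftrightarrow> (\<forall>p\<in>X.
     (F p \<noteq> None \<longrightarrow> (\<exists>U g. p \<in> U \<and> holo3 g U \<and> (\<forall>q\<in>U \<inter> X. F q = Some (g q)))) \<and>
     (F p = None \<longrightarrow> (\<exists>U g. p \<in> U \<and> holo3 g U \<and>
         (\<forall>q\<in>U \<inter> X. F q \<noteq> Some 0 \<and>
             F q = (if g q = 0 then None else Some (inverse (g q)))))))"

definition biholo_to_C :: "pt set \<Rightarrow> bool" where
  "biholo_to_C Y \<longleftrightarrow> (\<exists>\<phi> \<psi> V. bij_betw \<phi> UNIV Y \<and>
      (\<lambda>t. fst (\<phi> t)) holomorphic_on UNIV \<and>
      (\<lambda>t. fst (snd (\<phi> t))) holomorphic_on UNIV \<and>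
      (\<lambda>t. snd (snd (\<phi> t))) holomorphic_on UNIV \<and>
      Y \<subseteq> V \<and> holo3 \<psi> V \<and> (\<forall>t. \<psi> (\<phi> t) = t))"

definition deformation_retract_of :: "'a::topological_space set \<Rightarrow> 'a set \<Rightarrow> bool" where
  "deformation_retract_of S X \<longleftrightarrow> S \<subseteq> X \<and> (\<exists>r. r ` X \<subseteq> S \<and> (\<forall>x\<in>S. r x = x) \<and>
      homotopic_with (\<lambda>h. \<forall>x\<in>S. h x = x) (top_of_set X) (top_of_set X) id r)"

end

theory Submission
  imports Defs
begin


definition cF :: "real \<Rightarrow> real" where
  "cF s = root 3 (s/2 + sqrt (s^2/4 + s^3/27)) + root 3 (s/2 - sqrt (s^2/4 + s^3/27))"

lemma cF_eq: assumes "s \<ge> 0" shows "cF s ^ 3 + s * cF s - s = 0"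
proof -
  define X where "X = s/2 + sqrt (s^2/4 + s^3/27)"
  define Y where "Y = s/2 - sqrt (s^2/4 + s^3/27)"
  define u where "u = root 3 X"
  define v where "v = root 3 Y"
  have u3: "u^3 = X" unfolding u_def by (simp add: odd_real_root_pow)
  have v3: "v^3 = Y" unfolding v_def by (simp add: odd_real_root_pow)
  have "X * Y = s^2/4 - (sqrt (s^2/4 + s^3/27))^2" unfolding X_def Y_def by (simp add: algebra_simps power2_eq_square)
  also have "(sqrt (s^2/4 + s^3/27))^2 = s^2/4 + s^3/27"
    using assms by simp
  finally have XY: "X * Y = (-s/3)^3" by (simp add: power3_eq_cube)
  have uv: "u * v = -s/3" unfolding u_def v_def
    by (simp add: real_root_mult[symmetric] XY odd_real_root_power_cancel real_root_minus)
  have cf: "cF s = u + v" unfolding cF_def u_def v_def X_def Y_def by simp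
  have cube: "(u + v) ^ 3 = u ^ 3 + v ^ 3 + 3 * (u * v) * (u + v)" by (simp add: power3_eq_cube algebra_simps)
  have xy: "X + Y = s" unfolding X_def Y_def by simp
  have "cF s ^ 3 + s * cF s - s = (u ^ 3 + v ^ 3 + 3 * (u * v) * (u + v)) + s * (u + v) - s"
    by (simp only: cf cube)
  also have "\<dots> = (X + Y) + 3 * (-s/3) * (u + v) + s * (u + v) - s" by (simp only: u3 v3 uv)
  also have "\<dots> = 0" using xy by (simp add: algebra_simps)
  finally show ?thesis .
qed

lemma cF_nonneg: assumes "s \<ge> 0" shows "cF s \<ge> 0"
proof -
  have "- (s/2 - sqrt (s^2/4 + s^3/27)) \<le> s/2 + sqrt (s^2/4 + s^3/27)" using assms by simp
  then have "root 3 (- (s/2 - sqrt (s^2/4 + s^3/27))) \<le> root 3 (s/2 + sqrt (s^2/4 + s^3/27))"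
    by (simp only: real_root_le_iff)
  then have "- root 3 (s/2 - sqrt (s^2/4 + s^3/27)) \<le> root 3 (s/2 + sqrt (s^2/4 + s^3/27))"
    by (simp only: real_root_minus)
  then show ?thesis unfolding cF_def by linarith
qed

lemma cubic_mono: assumes "(s::real) \<ge> 0" "x \<ge> 0" "y \<ge> 0" "x < y" shows "x^3 + s*x < y^3 + s*y"
proof -
  have "x^3 < y^3" using assms by (simp add: power_strict_mono)
  moreover have "s*x \<le> s*y" using assms by (simp add: mult_left_mono)
  ultimately show ?thesis by simp
qed

lemma cubic_unique: assumes "(s::real) \<ge> 0" "x \<ge> 0" "y \<ge> 0" "x^3 + s*x - s = 0" "y^3 + s*y - s = 0"
  shows "x = y"
proof (rule ccontr)
  assume "x \<noteq> y"
  then consider "x < y" | "y < x" by linarith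
  then show False
  proof cases
    case 1 then show False using cubic_mono[OF assms(1,2,3)] assms(4,5) by linarith
  next
    case 2 then show False using cubic_mono[OF assms(1,3,2)] assms(4,5) by linarith
  qed
qed

lemma cF_le1: assumes "s \<ge> 0" shows "cF s \<le> 1"
proof (rule ccontr)
  assume "\<not> cF s \<le> 1"
  then have "1 < cF s" by simp
  then have "1 < cF s ^ 3" by (simp add: less_1_mult power3_eq_cube)
  moreover have "s \<le> s * cF s" using \<open>1 < cF s\<close> assms by (simp add: mult_le_cancel_left1)
  ultimately show False using cF_eq[OF assms] by simp
qed

lemma cF_unique: assumes "s \<ge> 0" "x \<ge> 0" "x^3 + s*x - s = 0" shows "cF s = x"
  using cubic_unique[OF assms(1) cF_nonneg[OF assms(1)] assms(2) cF_eq[OF assms(1)] assms(3)] .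

lemma cF_0[simp]: "cF 0 = 0" using cF_unique[of 0 0] by simp

lemma cF_cube_le: assumes "s \<ge> 0" shows "cF s ^ 3 \<le> s"
proof -
  have "0 \<le> s * cF s" using cF_nonneg[OF assms] assms by simp
  then show ?thesis using cF_eq[OF assms] by linarith
qed

lemma cF_lt1: assumes "s \<ge> 0" shows "cF s < 1"
proof -
  have "cF s \<noteq> 1"
  proof
    assume "cF s = 1"
    then show False using cF_eq[OF assms] by simp
  qed
  then show ?thesis using cF_le1[OF assms] by linarith
qed

lemma continuous_on_cF: "continuous_on A cF"
  unfolding cF_def by (intro continuous_intros) auto

definition cG :: "real \<Rightarrow> real" where
  "cG u = (if u \<le> 0 then 1 else cF (1/u))"

lemma cG_eq: assumes "u \<ge> 0" shows "u * cG u ^ 3 + cG u - 1 = 0"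
proof (cases "u = 0")
  case True then show ?thesis by (simp add: cG_def)
next
  case False
  then have "u > 0" using assms by simp
  have "cF (1/u) ^ 3 + (1/u) * cF (1/u) - 1/u = 0" by (rule cF_eq) (use \<open>u>0\<close> in simp)
  then have "u * (cF (1/u) ^ 3 + (1/u) * cF (1/u) - 1/u) = 0" by simp
  then show ?thesis using \<open>u>0\<close> by (simp add: cG_def algebra_simps)
qed

lemma cG_range: "0 \<le> cG u" "cG u \<le> 1"
  by (auto simp: cG_def cF_nonneg cF_le1)

lemma cG_0[simp]: "cG 0 = 1" by (simp add: cG_def)

lemma cG_bound: "\<bar>cG u - 1\<bar> \<le> \<bar>u\<bar>"
proof (cases "u \<le> 0")
  case True then show ?thesis by (simp add: cG_def)
next
  case False
  have e: "u * cG u ^ 3 + cG u - 1 = 0" using cG_eq[of u] False by simp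
  have "cG u ^ 3 \<le> 1" using cG_range by (simp add: power_le_one)
  moreover have "0 \<le> cG u ^ 3" using cG_range by simp
  ultimately have le: "u * cG u ^ 3 \<le> u" using False by (simp add: mult_left_le)
  have ge: "0 \<le> u * cG u ^ 3" using False \<open>0 \<le> cG u ^ 3\<close> by simp
  have "1 - cG u = u * cG u ^ 3" using e by linarith
  then have "\<bar>cG u - 1\<bar> = u * cG u ^ 3" using ge by linarith
  then show ?thesis using le False by linarith
qed

lemma isCont_cG: "isCont cG x"
proof (cases "x = 0")
  case True
  have "(cG \<longlongrightarrow> 1) (at 0)"
  proof (rule tendsto_sandwich[where f="\<lambda>u. 1 - \<bar>u\<bar>" and h="\<lambda>u. 1 + \<bar>u\<bar>"])
    have b: "1 - \<bar>n\<bar> \<le> cG n" "cG n \<le> 1 + \<bar>n\<bar>" for n using cG_bound[of n] by (smt (verit))+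
    show "\<forall>\<^sub>F n in at 0. 1 - \<bar>n\<bar> \<le> cG n" using b(1) by (intro always_eventually allI)
    show "\<forall>\<^sub>F n in at 0. cG n \<le> 1 + \<bar>n\<bar>" using b(2) by (intro always_eventually allI)
    have "isCont (\<lambda>u::real. 1 - \<bar>u\<bar>) 0" by (intro continuous_intros)
    then show "((\<lambda>u::real. 1 - \<bar>u\<bar>) \<longlongrightarrow> (1::real)) (at 0)" by (simp add: isCont_def)
    have "isCont (\<lambda>u::real. 1 + \<bar>u\<bar>) 0" by (intro continuous_intros)
    then show "((\<lambda>u::real. 1 + \<bar>u\<bar>) \<longlongrightarrow> (1::real)) (at 0)" by (simp add: isCont_def)
  qed
  then show ?thesis using True by (simp add: isCont_def)
next
  case False
  show ?thesis
  proof (cases "x < 0")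
    case True
    have ev: "eventually (\<lambda>u. u \<in> {..<0}) (nhds x)"
      by (rule eventually_nhds_in_open[OF open_lessThan]) (simp add: True)
    have e2: "\<forall>\<^sub>F u in nhds x. (\<lambda>u. 1::real) u = cG u"
      using ev by (rule eventually_mono) (auto simp add: cG_def)
    have c: "isCont (\<lambda>u. 1::real) x" by (rule continuous_const)
    show ?thesis by (rule isCont_cong[OF e2, THEN iffD1, OF c])
  next
    case False
    then have "x > 0" using \<open>x \<noteq> 0\<close> by simp
    have c: "isCont (\<lambda>u. cF (1/u)) x"
    proof (rule isCont_o2[where g=cF])
      show "isCont (\<lambda>u. 1/u) x" using \<open>x>0\<close> by (intro continuous_divide) (auto intro: continuous_intros)
      show "isCont cF (1/x)" using continuous_on_cF[of UNIV] by (simp add: continuous_on_eq_continuous_at)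
    qed
    have ev: "eventually (\<lambda>u. u \<in> {0<..}) (nhds x)"
      by (rule eventually_nhds_in_open[OF open_greaterThan]) (simp add: \<open>x>0\<close>)
    have e2: "\<forall>\<^sub>F u in nhds x. (\<lambda>u. cF (1/u)) u = cG u"
      using ev by (rule eventually_mono) (auto simp add: cG_def)
    show ?thesis by (rule isCont_cong[OF e2, THEN iffD1, OF c])
  qed
qed

lemma continuous_on_cG: "continuous_on A cG"
  by (simp add: continuous_at_imp_continuous_on isCont_cG)


definition clin :: "(pt \<Rightarrow> complex) \<Rightarrow> bool" where
  "clin L \<longleftrightarrow> (\<forall>c a b d. L (c * a, c * b, c * d) = c * L (a, b, d))"

definition cdiff :: "(pt \<Rightarrow> complex) \<Rightarrow> pt \<Rightarrow> bool" where
  "cdiff f x \<longleftrightarrow> (\<exists>L. (f has_derivative L) (at x) \<and> clin L)"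

lemma holo3I: "open U \<Longrightarrow> (\<And>x. x \<in> U \<Longrightarrow> cdiff g x) \<Longrightarrow> holo3 g U"
  unfolding holo3_def cdiff_def clin_def by blast

lemma cdiff_const: "cdiff (\<lambda>_. k) x"
  unfolding cdiff_def clin_def by (rule exI[of _ "\<lambda>_. 0"]) simp

lemma cdiff_fst: "cdiff (\<lambda>p. fst p) x"
  unfolding cdiff_def clin_def
  by (rule exI[of _ "\<lambda>p. fst p"]) (auto intro!: derivative_eq_intros)

lemma cdiff_snd1: "cdiff (\<lambda>p. fst (snd p)) x"
  unfolding cdiff_def clin_def
  by (rule exI[of _ "\<lambda>p. fst (snd p)"]) (auto intro!: derivative_eq_intros)

lemma cdiff_snd2: "cdiff (\<lambda>p. snd (snd p)) x"
  unfolding cdiff_def clin_def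
  by (rule exI[of _ "\<lambda>p. snd (snd p)"]) (auto intro!: derivative_eq_intros)

lemma cdiff_add: assumes "cdiff f x" "cdiff g x" shows "cdiff (\<lambda>p. f p + g p) x"
proof -
  obtain L M where L: "(f has_derivative L) (at x)" "clin L" and M: "(g has_derivative M) (at x)" "clin M"
    using assms unfolding cdiff_def by blast
  show ?thesis unfolding cdiff_def
    by (rule exI[of _ "\<lambda>h. L h + M h"])
       (use L M in \<open>auto intro!: has_derivative_add simp: clin_def distrib_left\<close>)
qed

lemma cdiff_diff: assumes "cdiff f x" "cdiff g x" shows "cdiff (\<lambda>p. f p - g p) x"
proof -
  obtain L M where L: "(f has_derivative L) (at x)" "clin L" and M: "(g has_derivative M) (at x)" "clin M"
    using assms unfolding cdiff_def by blast
  show ?thesis unfolding cdiff_def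
    by (rule exI[of _ "\<lambda>h. L h - M h"])
       (use L M in \<open>auto intro!: has_derivative_diff simp: clin_def right_diff_distrib\<close>)
qed

lemma cdiff_mult: assumes "cdiff f x" "cdiff g x" shows "cdiff (\<lambda>p. f p * g p) x"
proof -
  obtain L M where L: "(f has_derivative L) (at x)" "clin L" and M: "(g has_derivative M) (at x)" "clin M"
    using assms unfolding cdiff_def by blast
  have "clin (\<lambda>h. f x * M h + L h * g x)"
    using L(2) M(2) unfolding clin_def by (simp add: algebra_simps)
  then show ?thesis unfolding cdiff_def
    using has_derivative_mult[OF L(1) M(1)] by blast
qed

lemma cdiff_divide: assumes "cdiff f x" "cdiff g x" "g x \<noteq> 0" shows "cdiff (\<lambda>p. f p / g p) x"
proof -
  obtain L M where L: "(f has_derivative L) (at x)" "clin L" and M: "(g has_derivative M) (at x)" "clin M"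
    using assms unfolding cdiff_def by blast
  have "clin (\<lambda>h. - f x * (inverse (g x) * M h * inverse (g x)) + L h / g x)"
    using L(2) M(2) unfolding clin_def by (simp add: algebra_simps)
  then show ?thesis unfolding cdiff_def
    using has_derivative_divide[OF L(1) M(1) assms(3)] by blast
qed

lemma cdiff_power: assumes "cdiff f x" shows "cdiff (\<lambda>p. f p ^ n) x"
proof (induction n)
  case 0 then show ?case using cdiff_const[of 1 x] by simp
next
  case (Suc n)
  have "cdiff (\<lambda>p. f p * f p ^ n) x" by (rule cdiff_mult[OF assms Suc])
  then show ?case by simp
qed

lemmas cdiff_intros = cdiff_const cdiff_fst cdiff_snd1 cdiff_snd2 cdiff_add cdiff_diff cdiff_mult cdiff_divide cdiff_power

lemma open_fst_neq: "open {p::pt. fst p \<noteq> k}"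
  by (rule open_Collect_neq) (auto intro!: continuous_intros)
lemma open_snd2_neq: "open {p::pt. snd (snd p) \<noteq> k}"
  by (rule open_Collect_neq) (auto intro!: continuous_intros)

lemma holo_g1: "holo3 (\<lambda>p. fst (snd p) / (fst p - 1)) {p. fst p \<noteq> 1}"
  by (rule holo3I[OF open_fst_neq]) (auto intro!: cdiff_intros)
lemma holo_g2: "holo3 (\<lambda>p. fst p ^ 3 / snd (snd p)) {p. snd (snd p) \<noteq> 0}"
  by (rule holo3I[OF open_snd2_neq]) (auto intro!: cdiff_intros)
lemma holo_g3: "holo3 (\<lambda>p. snd (snd p) / fst p ^ 3) {p. fst p \<noteq> 0}"
  by (rule holo3I[OF open_fst_neq]) (auto intro!: cdiff_intros)
lemma holo_psi1: "holo3 (\<lambda>p. fst p) UNIV"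
  by (rule holo3I) (auto intro!: cdiff_intros)
lemma holo_psi2: "holo3 (\<lambda>p. fst (snd p)) UNIV"
  by (rule holo3I) (auto intro!: cdiff_intros)
lemma holo_psi3: "holo3 (\<lambda>p. snd (snd p)) UNIV"
  by (rule holo3I) (auto intro!: cdiff_intros)

lemma Phi_simp: "Phi (A,B,C) = (if A \<noteq> 1 then Some (B / (A - 1)) else if C \<noteq> 0 then Some (A^3 / C) else None)"
  by (simp add: Phi_def)

lemma W_iff: "(A,B,C) \<in> W \<longleftrightarrow> A^3 * (A - 1) = B * C"
  by (simp add: W_def)

lemma holo_Phi: "holo_to_sphere Phi W"
  unfolding holo_to_sphere_def
proof (intro ballI conjI impI)
  fix p assume pW: "p \<in> W" and "Phi p \<noteq> None"
  obtain A B C where p: "p = (A,B,C)" by (cases p) auto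
  show "\<exists>U g. p \<in> U \<and> holo3 g U \<and> (\<forall>q\<in>U \<inter> W. Phi q = Some (g q))"
  proof (cases "A = 1")
    case False
    show ?thesis
      by (rule exI[of _ "{p. fst p \<noteq> 1}"], rule exI[of _ "\<lambda>p. fst (snd p) / (fst p - 1)"])
         (use False p holo_g1 in \<open>auto simp: Phi_def\<close>)
  next
    case True
    then have "C \<noteq> 0" using \<open>Phi p \<noteq> None\<close> p by (auto simp: Phi_def)
    have "Phi q = Some (fst q ^ 3 / snd (snd q))" if "q \<in> {p. snd (snd p) \<noteq> 0} \<inter> W" for q
    proof -
      obtain A' B' C' where q: "q = (A',B',C')" by (cases q) auto
      have "C' \<noteq> 0" "A'^3 * (A' - 1) = B' * C'" using that q by (auto simp: W_def)
      then show ?thesis using q by (auto simp: Phi_def field_simps)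
    qed
    then show ?thesis
      by (intro exI[of _ "{p. snd (snd p) \<noteq> 0}"] exI[of _ "\<lambda>p. fst p ^ 3 / snd (snd p)"])
         (use \<open>C \<noteq> 0\<close> p holo_g2 in auto)
  qed
next
  fix p assume pW: "p \<in> W" and "Phi p = None"
  obtain A B C where p: "p = (A,B,C)" by (cases p) auto
  have A1: "A = 1" "C = 0" using \<open>Phi p = None\<close> p by (auto simp: Phi_def split: if_splits)
  have "Phi q \<noteq> Some 0 \<and> Phi q = (if snd (snd q) / fst q ^ 3 = 0 then None else Some (inverse (snd (snd q) / fst q ^ 3)))"
    if "q \<in> {p. fst p \<noteq> 0} \<inter> W" for q
  proof -
    obtain A' B' C' where q: "q = (A',B',C')" by (cases q) auto
    have h: "A' \<noteq> 0" "A'^3 * (A' - 1) = B' * C'" using that q by (auto simp: W_def)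
    show ?thesis
    proof (cases "A' = 1")
      case True
      then show ?thesis using q h by (auto simp: Phi_def divide_inverse)
    next
      case False
      have "C' \<noteq> 0" using h False by auto
      then show ?thesis using q h False by (auto simp: Phi_def field_simps)
    qed
  qed
  then show "\<exists>U g. p \<in> U \<and> holo3 g U \<and> (\<forall>q\<in>U \<inter> W. Phi q \<noteq> Some 0 \<and>
             Phi q = (if g q = 0 then None else Some (inverse (g q))))"
    by (intro exI[of _ "{p. fst p \<noteq> 0}"] exI[of _ "\<lambda>p. snd (snd p) / fst p ^ 3"])
       (use A1 p holo_g3 in auto)
qed

lemma Phi_surj: "Phi ` W = UNIV"
proof -
  have "z \<in> Phi ` W" for z
  proof (cases z)
    case None
    have "(1,0,0) \<in> W" "Phi (1,0,0) = None" by (auto simp: W_def Phi_def)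
    then show ?thesis using None by force
  next
    case (Some w)
    have "(0, -w, 0) \<in> W" "Phi (0,-w,0) = Some w" by (auto simp: W_def Phi_def)
    then show ?thesis using Some by force
  qed
  then show ?thesis by auto
qed

lemma S2_sub_W: "S2 \<subseteq> W"
proof
  fix p assume "p \<in> S2"
  then obtain A B C where p: "p = (A,B,C)" and A: "A \<in> \<real>" "0 \<le> Re A" "Re A \<le> 1"
    and B: "cmod B = sqrt (Re A ^ 3 * (1 - Re A))" and C: "C = - cnj B"
    by (auto simp: S2_def)
  have A': "A = complex_of_real (Re A)" using A(1) by (simp add: complex_is_Real_iff complex_eq_iff)
  have nn: "0 \<le> Re A ^ 3 * (1 - Re A)" using A by simp
  have "B * cnj B = complex_of_real ((cmod B)^2)" by (rule complex_norm_square[symmetric])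
  also have "\<dots> = complex_of_real (Re A ^ 3 * (1 - Re A))" using B nn by simp
  finally have "B * C = - complex_of_real (Re A ^ 3 * (1 - Re A))" using C by simp
  also have "\<dots> = A^3 * (A - 1)" by (subst (2 3) A') (simp add: algebra_simps)
  finally show "p \<in> W" using p by (simp add: W_def)
qed


lemma biholoI:
  assumes "\<And>t. \<psi> (\<phi> t) = t" "range \<phi> = Y"
    "(\<lambda>t. fst (\<phi> t)) holomorphic_on UNIV"
    "(\<lambda>t. fst (snd (\<phi> t))) holomorphic_on UNIV"
    "(\<lambda>t. snd (snd (\<phi> t))) holomorphic_on UNIV"
    "holo3 \<psi> UNIV"
  shows "biholo_to_C Y"
  unfolding biholo_to_C_def
proof (intro exI conjI)
  show "bij_betw \<phi> UNIV Y" unfolding bij_betw_def using assms(1,2) by (metis injI)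
qed (use assms in auto)

lemma fiber_None: "biholo_to_C {p \<in> W. Phi p = None}"
proof (rule biholoI[where \<phi>="\<lambda>t. (1, t, 0)" and \<psi>="\<lambda>p. fst (snd p)"])
  show "range (\<lambda>t. (1::complex, t, 0::complex)) = {p \<in> W. Phi p = None}"
    by (auto simp: W_def Phi_def split: if_splits)
qed (auto intro: holo_psi2)

lemma fiber_0: "biholo_to_C {p \<in> W. Phi p = Some 0}"
proof (rule biholoI[where \<phi>="\<lambda>t. (0, 0, t)" and \<psi>="\<lambda>p. snd (snd p)"])
  show "range (\<lambda>t. (0::complex, 0::complex, t)) = {p \<in> W. Phi p = Some 0}"
  proof (intro set_eqI iffI)
    fix p assume "p \<in> {p \<in> W. Phi p = Some 0}"
    moreover obtain A B C where p: "p = (A,B,C)" by (cases p) auto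
    ultimately have h: "A^3 * (A - 1) = B * C" "Phi (A,B,C) = Some 0" by (auto simp: W_def)
    have "A \<noteq> 1" using h(2) by (auto simp: Phi_def split: if_splits)
    then have "B = 0" using h(2) by (auto simp: Phi_def)
    then have "A = 0" using h(1) \<open>A \<noteq> 1\<close> by auto
    then show "p \<in> range (\<lambda>t. (0, 0, t))" using p \<open>B = 0\<close> by auto
  qed (auto simp: W_def Phi_def)
qed (auto intro: holo_psi3)

lemma fiber_w: assumes "w \<noteq> 0" shows "biholo_to_C {p \<in> W. Phi p = Some w}"
proof (rule biholoI[where \<phi>="\<lambda>t. (t, w * (t - 1), t^3 / w)" and \<psi>="\<lambda>p. fst p"])
  show "range (\<lambda>t. (t, w * (t - 1), t^3 / w)) = {p \<in> W. Phi p = Some w}"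
  proof (intro set_eqI iffI)
    fix p assume "p \<in> {p \<in> W. Phi p = Some w}"
    moreover obtain A B C where p: "p = (A,B,C)" by (cases p) auto
    ultimately have h: "A^3 * (A - 1) = B * C" "Phi (A,B,C) = Some w" by (auto simp: W_def)
    show "p \<in> range (\<lambda>t. (t, w * (t - 1), t^3 / w))"
    proof (cases "A = 1")
      case False
      then have B: "B = w * (A - 1)" using h(2) by (auto simp: Phi_def field_simps)
      then have "A^3 * (A - 1) = w * C * (A - 1)" using h(1) by simp
      then have "A^3 = w * C" using False by simp
      then have "C = A^3 / w" using assms by (simp add: field_simps)
      then show ?thesis using p B by auto
    next
      case True
      then have "C \<noteq> 0" "1 / C = w" using h(2) by (auto simp: Phi_def split: if_splits)
      then have "C = 1 / w" using assms by (simp add: field_simps)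
      moreover have "B = 0" using h(1) True \<open>C \<noteq> 0\<close> by simp
      ultimately show ?thesis using p True by (auto intro!: image_eqI[of _ _ 1])
    qed
  next
    fix p assume "p \<in> range (\<lambda>t. (t, w * (t - 1), t^3 / w))"
    then obtain t where p: "p = (t, w * (t - 1), t^3 / w)" by auto
    have "p \<in> W" using p assms by (simp add: W_def field_simps)
    moreover have "Phi p = Some w" using p assms by (auto simp: Phi_def field_simps)
    ultimately show "p \<in> {p \<in> W. Phi p = Some w}" by simp
  qed
qed (use assms in \<open>auto intro!: holo_psi1 holomorphic_intros\<close>)

lemma fibers: "biholo_to_C {p \<in> W. Phi p = z}"
proof (cases z)
  case None then show ?thesis using fiber_None by simp
next
  case (Some w) then show ?thesis using fiber_0 fiber_w by (cases "w = 0") auto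
qed


lemma top_hom: assumes "S homeomorphic T" shows "top_of_set S homeomorphic_space top_of_set T"
proof -
  obtain f g where h: "homeomorphism S T f g" using assms unfolding homeomorphic_def by blast
  have "homeomorphic_maps (top_of_set S) (top_of_set T) f g"
    using h unfolding homeomorphism_def homeomorphic_maps_def
    by (auto simp: continuous_map_subtopology_eu)
  then show ?thesis unfolding homeomorphic_space_def by blast
qed

definition hS :: "real \<times> complex \<Rightarrow> pt" where
  "hS q = (complex_of_real ((1 + fst q)/2), snd q * complex_of_real ((1 + fst q)/4),
           - cnj (snd q * complex_of_real ((1 + fst q)/4)))"

lemma norm_eq1: "norm (x::real, w::complex) = 1 \<longleftrightarrow> x^2 + (cmod w)^2 = 1"
  by (simp add: norm_Pair)

lemma in_sphere_iff: "(x, w) \<in> sphere (0::real \<times> complex) 1 \<longleftrightarrow> x^2 + (cmod w)^2 = 1"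
  by (simp add: norm_Pair)

lemma hS_in: assumes "x^2 + (cmod w)^2 = 1" shows "hS (x, w) \<in> S2"
proof -
  have x: "-1 \<le> x" "x \<le> 1" using assms abs_square_le_1[of x]
    by (smt (verit) zero_le_power2)+
  define a where "a = (1 + x)/2"
  have a: "0 \<le> a" "a \<le> 1" using x by (auto simp: a_def)
  have "a^3 * (1 - a) = ((1 + x) * cmod w / 4)^2"
  proof -
    have "((1 + x) * cmod w / 4)^2 = (1+x)^2 * (cmod w)^2 / 16" by (simp add: power_mult_distrib power_divide)
    also have "\<dots> = (1+x)^2 * (1 - x^2) / 16" using assms by (simp add: eq_diff_eq)
    also have "\<dots> = a^3 * (1 - a)" by (simp add: a_def field_simps power2_eq_square power3_eq_cube)
    finally show ?thesis by simp
  qed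
  then have "sqrt (a^3 * (1 - a)) = (1 + x) * cmod w / 4" using x by simp
  moreover have "cmod (w * complex_of_real ((1 + x)/4)) = (1 + x) * cmod w / 4"
    unfolding norm_mult norm_of_real using x by simp
  ultimately show ?thesis using a unfolding hS_def S2_def a_def by auto
qed

lemma hS_onto: assumes "p \<in> S2" shows "\<exists>q \<in> sphere (0::real \<times> complex) 1. hS q = p"
proof -
  obtain A B C where p: "p = (A,B,C)" and A: "A \<in> \<real>" "0 \<le> Re A" "Re A \<le> 1"
    and B: "cmod B = sqrt (Re A ^ 3 * (1 - Re A))" and C: "C = - cnj B"
    using assms by (auto simp: S2_def)
  define a where "a = Re A"
  have A': "A = complex_of_real a" using A(1) unfolding a_def by (simp add: complex_is_Real_iff complex_eq_iff)
  have nn: "0 \<le> a ^ 3 * (1 - a)" using A unfolding a_def by simp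
  have B2: "(cmod B)^2 = a^3 * (1 - a)" using B nn unfolding a_def by simp
  show ?thesis
  proof (cases "a = 0")
    case True
    then have "B = 0" using B2 by simp
    then show ?thesis using True p A' C
      by (intro bexI[of _ "(-1, 0)"]) (auto simp: hS_def in_sphere_iff)
  next
    case False
    then have "a > 0" using A unfolding a_def by simp
    define w where "w = B * complex_of_real (2 / a)"
    have "(cmod w)^2 = 4 * a * (1 - a)"
    proof -
      have "cmod w = cmod B * (2/a)" unfolding w_def norm_mult norm_of_real using \<open>a>0\<close> by simp
      then have "(cmod w)^2 = (cmod B)^2 * (2/a)^2" by (simp only: power_mult_distrib)
      also have "\<dots> = 4 * a * (1 - a)" using B2 \<open>a>0\<close> by (simp add: power2_eq_square power3_eq_cube field_simps)
      finally show ?thesis .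
    qed
    then have sp: "(2*a - 1)^2 + (cmod w)^2 = 1" by (simp add: power2_eq_square algebra_simps)
    have "hS (2*a - 1, w) = p"
    proof -
      have "w * complex_of_real ((1 + (2*a - 1))/4) = B"
        unfolding w_def using \<open>a>0\<close> by (simp add: field_simps)
      then show ?thesis using p A' C by (simp add: hS_def)
    qed
    then show ?thesis using sp by (intro bexI[of _ "(2*a-1, w)"]) (auto simp: in_sphere_iff norm_eq1)
  qed
qed

lemma hS_image: "hS ` sphere (0::real \<times> complex) 1 = S2"
proof
  show "hS ` sphere 0 1 \<subseteq> S2"
  proof
    fix p assume "p \<in> hS ` sphere (0::real \<times> complex) 1"
    then obtain x w where "(x,w) \<in> sphere (0::real \<times> complex) 1" "p = hS (x,w)" by auto
    then show "p \<in> S2" using hS_in by (simp add: norm_eq1)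
  qed
  show "S2 \<subseteq> hS ` sphere 0 1" using hS_onto by blast
qed

lemma hS_inj: "inj_on hS (sphere (0::real \<times> complex) 1)"
proof (rule inj_onI)
  fix q q' assume q: "q \<in> sphere (0::real \<times> complex) 1" and q': "q' \<in> sphere (0::real \<times> complex) 1"
    and e: "hS q = hS q'"
  obtain x w x' w' where qq: "q = (x,w)" "q' = (x',w')" by (cases q, cases q') auto
  have s: "x^2 + (cmod w)^2 = 1" "x'^2 + (cmod w')^2 = 1" using q q' qq by (auto simp: norm_eq1)
  have "complex_of_real ((1 + x)/2) = complex_of_real ((1 + x')/2)" using e qq by (simp add: hS_def)
  then have xx: "x = x'" by simp
  have ww: "w * complex_of_real ((1 + x)/4) = w' * complex_of_real ((1 + x)/4)" using e qq xx by (simp add: hS_def)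
  show "q = q'"
  proof (cases "x = -1")
    case True
    then have "w = 0" "w' = 0" using s xx by auto
    then show ?thesis using qq xx by simp
  next
    case False
    then have "(1 + x)/4 \<noteq> 0" by simp
    then have "complex_of_real ((1 + x)/4) \<noteq> 0" by (metis of_real_eq_0_iff)
    then have "w = w'" using ww by simp
    then show ?thesis using qq xx by simp
  qed
qed

lemma S2_homeo_sphere: "top_of_set S2 homeomorphic_space top_of_set (sphere (0::real^3) 1)"
proof -
  have c: "continuous_on (sphere (0::real \<times> complex) 1) hS"
    unfolding hS_def by (intro continuous_intros) auto
  obtain g where "homeomorphism (sphere (0::real \<times> complex) 1) S2 hS g"
    using homeomorphism_compact[OF compact_sphere c hS_image hS_inj] by blast
  then have h1: "sphere (0::real \<times> complex) 1 homeomorphic S2" unfolding homeomorphic_def by blast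
  have h2: "sphere (0::real^3) 1 homeomorphic sphere (0::real \<times> complex) 1"
    by (rule homeomorphic_spheres') auto
  have "S2 homeomorphic sphere (0::real^3) 1"
    using homeomorphic_trans[OF h2 h1] homeomorphic_sym by blast
  then show ?thesis by (rule top_hom)
qed


definition rsP :: "complex option set \<Rightarrow> bool" where
  "rsP U \<longleftrightarrow> open {z. Some z \<in> U} \<and> (None \<in> U \<longrightarrow> compact {z. Some z \<notin> U})"

lemma istop_rsP: "istopology rsP"
  unfolding istopology_def
proof (intro conjI allI impI)
  fix S T assume S: "rsP S" and T: "rsP T"
  have o: "open {z. Some z \<in> S \<inter> T}"
    using S T unfolding rsP_def by (simp add: Collect_conj_eq open_Int)
  have "compact {z. Some z \<notin> S \<inter> T}" if "None \<in> S \<inter> T"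
  proof -
    have "{z. Some z \<notin> S \<inter> T} = {z. Some z \<notin> S} \<union> {z. Some z \<notin> T}" by auto
    then show ?thesis using S T that unfolding rsP_def by (simp add: compact_Un)
  qed
  then show "rsP (S \<inter> T)" using o unfolding rsP_def by blast
next
  fix K assume K: "\<forall>U\<in>K. rsP U"
  have eq: "{z. Some z \<in> \<Union>K} = (\<Union>U\<in>K. {z. Some z \<in> U})" by auto
  have o: "open {z. Some z \<in> \<Union>K}" unfolding eq using K unfolding rsP_def by (intro open_UN) auto
  have "compact {z. Some z \<notin> \<Union>K}" if N: "None \<in> \<Union>K"
  proof -
    obtain U where U: "U \<in> K" "None \<in> U" using N by auto
    have c: "compact {z. Some z \<notin> U}" using K U unfolding rsP_def by auto
    have cl: "closed {z. Some z \<notin> \<Union>K}"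
      using o by (simp add: closed_def Collect_neg_eq[symmetric])
    have "{z. Some z \<notin> \<Union>K} = {z. Some z \<notin> U} \<inter> {z. Some z \<notin> \<Union>K}" using U by auto
    then show ?thesis using compact_Int_closed[OF c cl] by simp
  qed
  then show "rsP (\<Union>K)" using o unfolding rsP_def by blast
qed

lemma openin_rs: "openin riemann_sphere U \<longleftrightarrow> rsP U"
  unfolding riemann_sphere_def using istop_rsP unfolding rsP_def[abs_def] by simp

lemma topspace_rs: "topspace riemann_sphere = UNIV"
proof -
  have "openin riemann_sphere UNIV" unfolding openin_rs rsP_def by simp
  then show ?thesis using openin_subset by blast
qed

lemma rsP_Some_open: "open V \<Longrightarrow> rsP (Some ` V)"
  unfolding rsP_def by (auto simp: image_iff)

lemma rsP_None_nbhd: "compact K \<Longrightarrow> rsP (insert None (Some ` (- K)))"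
proof -
  assume "compact K"
  have e1: "{z. Some z \<in> insert None (Some ` (- K))} = - K" by auto
  have e2: "{z. Some z \<notin> insert None (Some ` (- K))} = K" by auto
  show ?thesis unfolding rsP_def e1 e2 using \<open>compact K\<close>
    by (simp add: compact_imp_closed open_Compl)
qed

lemma Hausdorff_rs: "Hausdorff_space riemann_sphere"
  unfolding Hausdorff_space_def topspace_rs openin_rs
proof (intro allI impI)
  fix x y :: "complex option" assume "x \<in> UNIV \<and> y \<in> UNIV \<and> x \<noteq> y"
  then have xy: "x \<noteq> y" by simp
  have noneSome: "\<exists>U V. rsP U \<and> rsP V \<and> None \<in> U \<and> Some b \<in> V \<and> disjnt U V" for b
    by (intro exI[of _ "insert None (Some ` (- cball b 1))"] exI[of _ "Some ` ball b 1"])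
       (auto simp: rsP_None_nbhd rsP_Some_open disjnt_def)
  show "\<exists>U V. rsP U \<and> rsP V \<and> x \<in> U \<and> y \<in> V \<and> disjnt U V"
  proof (cases x)
    case None
    then obtain b where "y = Some b" using xy by (cases y) auto
    then show ?thesis using None noneSome by blast
  next
    case (Some a)
    show ?thesis
    proof (cases y)
      case None
      then show ?thesis using Some noneSome[of a] by (metis disjnt_sym)
    next
      case (Some b)
      then have "a \<noteq> b" using xy \<open>x = Some a\<close> by simp
      define r where "r = dist a b / 2"
      have r: "r > 0" using \<open>a \<noteq> b\<close> by (simp add: r_def)
      have "disjnt (ball a r) (ball b r)"
        unfolding disjnt_def r_def by (auto simp: dist_commute) (smt (verit) dist_triangle3)
      then have "disjnt (Some ` ball a r) (Some ` ball b r)" by (auto simp: disjnt_def)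
      then show ?thesis using \<open>x = Some a\<close> Some r
        by (intro exI[of _ "Some ` ball a r"] exI[of _ "Some ` ball b r"]) (auto simp: rsP_Some_open)
    qed
  qed
qed

lemma S2E:
  assumes "p \<in> S2"
  obtains a B where "p = (complex_of_real a, B, - cnj B)" "0 \<le> a" "a \<le> 1" "(cmod B)^2 = a^3 * (1 - a)"
proof -
  obtain A B C where p: "p = (A,B,C)" and A: "A \<in> \<real>" "0 \<le> Re A" "Re A \<le> 1"
    and B: "cmod B = sqrt (Re A ^ 3 * (1 - Re A))" and C: "C = - cnj B"
    using assms by (auto simp: S2_def)
  have A': "A = complex_of_real (Re A)" using A(1) by (simp add: complex_is_Real_iff complex_eq_iff)
  have nn: "0 \<le> Re A ^ 3 * (1 - Re A)" using A by simp
  show ?thesis using that[of "Re A" B] p A' C A B nn by simp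
qed

lemma S2I:
  assumes "0 \<le> a" "a \<le> 1" "(cmod B)^2 = a^3 * (1 - a)"
  shows "(complex_of_real a, B, - cnj B) \<in> S2"
proof -
  have "cmod B = sqrt (a^3 * (1 - a))" using assms(3) by (metis norm_ge_zero real_sqrt_unique)
  then show ?thesis using assms unfolding S2_def by simp
qed

lemma S2_A1: assumes "(complex_of_real 1, B, - cnj B) \<in> S2" shows "B = 0"
  using assms by (auto elim!: S2E)

definition N0 :: pt where "N0 = (1, 0, 0)"

lemma N0_S2: "N0 \<in> S2" unfolding N0_def using S2I[of 1 0] by simp

lemma Phi_S2:
  assumes "p \<in> S2"
  shows "Phi p = (if p = N0 then None else Some (fst (snd p) / (fst p - 1)))"
proof -
  obtain a B where p: "p = (complex_of_real a, B, - cnj B)" "0 \<le> a" "a \<le> 1" "(cmod B)^2 = a^3 * (1 - a)"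
    using assms by (rule S2E)
  show ?thesis
  proof (cases "a = 1")
    case True
    then have "B = 0" using p by simp
    then show ?thesis using p True by (simp add: Phi_def N0_def)
  next
    case False
    then have "complex_of_real a \<noteq> 1" by (metis of_real_eq_1_iff)
    then show ?thesis using p by (auto simp: Phi_def N0_def)
  qed
qed

lemma g_norm2:
  assumes "(cmod B)^2 = a^3 * (1 - a)" "a \<noteq> 1"
  shows "(cmod (B / (complex_of_real a - 1)))^2 = a^3 / (1 - a)"
proof -
  have "complex_of_real a - 1 = complex_of_real (a - 1)" by simp
  then have "cmod (complex_of_real a - 1) = \<bar>a - 1\<bar>" by (metis norm_of_real)
  then have "(cmod (B / (complex_of_real a - 1)))^2 = (cmod B)^2 / (a - 1)^2"
    by (simp add: norm_divide power_divide)
  also have "\<dots> = a^3 * (1 - a) / ((1 - a) * (1 - a))" using assms(1)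
    by (simp add: power2_eq_square algebra_simps)
  also have "\<dots> = a^3 / (1 - a)" using assms(2) by simp
  finally show ?thesis .
qed

lemma compact_S2: "compact S2"
proof -
  have c: "continuous_on (sphere (0::real \<times> complex) 1) hS"
    unfolding hS_def by (intro continuous_intros) auto
  show ?thesis using compact_continuous_image[OF c compact_sphere] hS_image by simp
qed

lemma cont_g: "continuous_on (S2 - {N0}) (\<lambda>p. fst (snd p) / (fst p - 1))"
proof (intro continuous_intros ballI)
  fix p assume "p \<in> S2 - {N0}"
  then obtain a B where p: "p = (complex_of_real a, B, - cnj B)" "0 \<le> a" "a \<le> 1" "(cmod B)^2 = a^3 * (1 - a)"
    "p \<noteq> N0" by (auto elim!: S2E)
  have "a \<noteq> 1" using p by (auto simp: N0_def)
  then show "fst p - 1 \<noteq> 0" using p by (simp add: of_real_eq_1_iff)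
qed

lemma Phi_cont: "continuous_map (top_of_set S2) riemann_sphere Phi"
  unfolding continuous_map_def topspace_rs openin_rs
proof (intro conjI allI impI)
  show "Phi \<in> topspace (top_of_set S2) \<rightarrow> UNIV" by simp
  fix U assume U: "rsP U"
  define g where "g = (\<lambda>p::pt. fst (snd p) / (fst p - 1))"
  define V where "V = {z. Some z \<in> U}"
  have oV: "open V" using U unfolding rsP_def V_def by simp
  have S2': "openin (top_of_set S2) (S2 - {N0})"
    by (simp add: openin_diff closedin_singleton N0_S2)
  have cg: "continuous_on (S2 - {N0}) g" using cont_g unfolding g_def .
  show "openin (top_of_set S2) {x \<in> topspace (top_of_set S2). Phi x \<in> U}"
  proof (cases "None \<in> U")
    case False
    have "{x \<in> topspace (top_of_set S2). Phi x \<in> U} = (S2 - {N0}) \<inter> g -` V"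
      using False by (auto simp: Phi_S2 V_def g_def split: if_splits)
    moreover have "openin (top_of_set (S2 - {N0})) ((S2 - {N0}) \<inter> g -` V)"
      by (rule continuous_openin_preimage_gen[OF cg oV])
    ultimately show ?thesis using openin_trans[OF _ S2'] by simp
  next
    case True
    define K where "K = {z. Some z \<notin> U}"
    have cK: "compact K" using U True unfolding rsP_def K_def by simp
    then obtain M where M: "\<And>z. z \<in> K \<Longrightarrow> norm z \<le> M" "M \<ge> 0"
      using compact_imp_bounded[OF cK] unfolding bounded_iff by (meson norm_ge_zero order_trans)
    define D where "D = S2 \<inter> {p. Re (fst p) ^ 3 \<le> M^2 * (1 - Re (fst p))}"
    have clD: "closed D" unfolding D_def
      by (intro closed_Int compact_imp_closed[OF compact_S2] closed_Collect_le continuous_intros)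
    have DS: "D \<subseteq> S2 - {N0}" unfolding D_def N0_def by auto
    have F: "{x \<in> S2 - {N0}. g x \<in> K} = D \<inter> g -` K"
    proof (intro set_eqI iffI)
      fix x assume x: "x \<in> {x \<in> S2 - {N0}. g x \<in> K}"
      then obtain a B where p: "x = (complex_of_real a, B, - cnj B)" "0 \<le> a" "a \<le> 1" "(cmod B)^2 = a^3 * (1 - a)"
        "x \<noteq> N0" by (auto elim!: S2E)
      have "a \<noteq> 1" using p by (auto simp: N0_def)
      then have a1: "a < 1" using p by simp
      have "norm (g x) \<le> M" using x M by auto
      then have "(norm (g x))^2 \<le> M^2" by (simp add: power_mono)
      then have "a^3 / (1 - a) \<le> M^2" using g_norm2[OF p(4) \<open>a \<noteq> 1\<close>] p(1) by (simp add: g_def)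
      then have "a^3 \<le> M^2 * (1 - a)" using a1 by (simp add: divide_le_eq)
      then show "x \<in> D \<inter> g -` K" using x p(1) unfolding D_def by simp
    next
      fix x assume x: "x \<in> D \<inter> g -` K"
      then show "x \<in> {x \<in> S2 - {N0}. g x \<in> K}" using DS by auto
    qed
    have clF: "closed {x \<in> S2 - {N0}. g x \<in> K}"
      unfolding F by (rule continuous_closed_preimage[OF continuous_on_subset[OF cg DS] clD compact_imp_closed[OF cK]])
    have "{x \<in> topspace (top_of_set S2). Phi x \<in> U} = S2 \<inter> - {x \<in> S2 - {N0}. g x \<in> K}"
      using True by (auto simp: Phi_S2 K_def g_def split: if_splits)
    then show ?thesis using clF by (simp add: openin_open_Int open_Compl)
  qed
qed

lemma Phi_S2_onto: "Phi ` S2 = UNIV"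
proof -
  have "z \<in> Phi ` S2" for z
  proof (cases z)
    case None
    then show ?thesis using N0_S2 Phi_S2[OF N0_S2] by force
  next
    case (Some w)
    define s where "s = (cmod w)^2"
    have s0: "s \<ge> 0" unfolding s_def by simp
    define a where "a = cF s"
    have a: "0 \<le> a" "a < 1" "a^3 = s * (1 - a)" using cF_nonneg[OF s0] cF_lt1[OF s0] cF_eq[OF s0]
      unfolding a_def by (auto simp: algebra_simps)
    define B where "B = w * (complex_of_real a - 1)"
    have "complex_of_real a - 1 = complex_of_real (a - 1)" by simp
    then have n: "cmod (complex_of_real a - 1) = 1 - a" using a by (metis norm_of_real abs_of_nonpos diff_le_0_iff_le less_imp_le minus_diff_eq)
    have "(cmod B)^2 = s * (1 - a)^2" unfolding B_def s_def by (simp add: norm_mult n power_mult_distrib)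
    also have "\<dots> = a^3 * (1 - a)" using a by (simp add: power2_eq_square)
    finally have B2: "(cmod B)^2 = a^3 * (1 - a)" .
    have pS: "(complex_of_real a, B, - cnj B) \<in> S2" using S2I[OF a(1) _ B2] a by simp
    have ne: "complex_of_real a - 1 \<noteq> 0" using a by (metis of_real_eq_1_iff right_minus_eq order_less_irrefl)
    have "Phi (complex_of_real a, B, - cnj B) = Some w"
      using ne by (simp add: Phi_def B_def)
    then show ?thesis using pS Some by force
  qed
  then show ?thesis by auto
qed

lemma a_from_w:
  assumes "(cmod B)^2 = a^3 * (1 - a)" "a \<noteq> 1" "0 \<le> a" "a \<le> 1"
  shows "a = cF ((cmod (B / (complex_of_real a - 1)))^2)"
proof -
  define s where "s = (cmod (B / (complex_of_real a - 1)))^2"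
  have s: "s = a^3 / (1 - a)" unfolding s_def by (rule g_norm2[OF assms(1,2)])
  have "s \<ge> 0" unfolding s_def by simp
  have "a^3 + s * a - s = a^3 - s * (1 - a)" by (simp add: algebra_simps)
  also have "\<dots> = 0" using s assms(2) by simp
  finally have "a^3 + s * a - s = 0" .
  then show ?thesis unfolding s_def[symmetric] using cF_unique[OF \<open>s \<ge> 0\<close> assms(3)] by simp
qed

lemma Phi_S2_inj: "inj_on Phi S2"
proof (rule inj_onI)
  fix p q assume p: "p \<in> S2" and q: "q \<in> S2" and e: "Phi p = Phi q"
  show "p = q"
  proof (cases "p = N0")
    case True
    then have "Phi q = None" using e Phi_S2[OF p] by simp
    then show ?thesis using True Phi_S2[OF q] by (simp split: if_splits)
  next
    case False
    then have qN: "q \<noteq> N0" using e Phi_S2[OF p] Phi_S2[OF q] by (auto split: if_splits)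
    obtain a B where pp: "p = (complex_of_real a, B, - cnj B)" "0 \<le> a" "a \<le> 1" "(cmod B)^2 = a^3 * (1 - a)"
      using p by (rule S2E)
    obtain a' B' where qq: "q = (complex_of_real a', B', - cnj B')" "0 \<le> a'" "a' \<le> 1" "(cmod B')^2 = a'^3 * (1 - a')"
      using q by (rule S2E)
    have a1: "a \<noteq> 1" using pp False by (auto simp: N0_def)
    have a1': "a' \<noteq> 1" using qq qN by (auto simp: N0_def)
    have ww: "B / (complex_of_real a - 1) = B' / (complex_of_real a' - 1)"
      using e Phi_S2[OF p] Phi_S2[OF q] False qN pp qq by simp
    have "a = a'" using a_from_w[OF pp(4) a1 pp(2,3)] a_from_w[OF qq(4) a1' qq(2,3)] ww by simp
    moreover have "complex_of_real a - 1 \<noteq> 0" using a1 by (metis of_real_eq_1_iff right_minus_eq)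
    ultimately have "B = B'" using ww by (simp add: divide_cancel_right)
    then show ?thesis using pp qq \<open>a = a'\<close> by simp
  qed
qed

lemma Phi_homeo: "homeomorphic_map (top_of_set S2) riemann_sphere Phi"
proof (rule continuous_imp_homeomorphic_map[OF Phi_cont])
  show "compact_space (top_of_set S2)" by (rule compact_space_subtopology) (simp add: compact_S2)
  show "Hausdorff_space riemann_sphere" by (rule Hausdorff_rs)
  show "Phi ` topspace (top_of_set S2) = topspace riemann_sphere" using Phi_S2_onto topspace_rs by simp
  show "inj_on Phi (topspace (top_of_set S2))" using Phi_S2_inj by simp
qed


lemma cont_zero_bound:
  fixes f g :: "'a::topological_space \<Rightarrow> complex" and h :: "'a \<Rightarrow> real"
  assumes cg: "continuous_on S g"
    and cf: "continuous_on (S \<inter> {x. g x \<noteq> 0}) f"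
    and ch: "continuous_on S h"
    and bd: "\<And>x. x \<in> S \<Longrightarrow> norm (f x) \<le> h x"
    and z: "\<And>x. x \<in> S \<Longrightarrow> g x = 0 \<Longrightarrow> h x = 0 \<and> f x = 0"
  shows "continuous_on S f"
  unfolding continuous_on_def
proof
  fix x assume x: "x \<in> S"
  show "(f \<longlongrightarrow> f x) (at x within S)"
  proof (cases "g x = 0")
    case True
    then have hx: "h x = 0" "f x = 0" using z x by auto
    have "(h \<longlongrightarrow> 0) (at x within S)" using ch x hx unfolding continuous_on_def by force
    moreover have "eventually (\<lambda>y. norm (f y) \<le> h y) (at x within S)"
      unfolding eventually_at_filter using bd by (intro always_eventually) auto
    ultimately have "(f \<longlongrightarrow> 0) (at x within S)" using Lim_null_comparison by blast
    then show ?thesis using hx by simp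
  next
    case False
    have "openin (top_of_set S) (S \<inter> g -` (-{0}))"
      by (rule continuous_openin_preimage_gen[OF cg]) auto
    then obtain Op where Op: "open Op" "S \<inter> g -` (-{0}) = S \<inter> Op" unfolding openin_open by blast
    have xO: "x \<in> Op" using Op x False by auto
    have e: "at x within S = at x within (S \<inter> {x. g x \<noteq> 0})"
      by (rule at_within_nhd[OF xO Op(1)]) (use Op in auto)
    have "(f \<longlongrightarrow> f x) (at x within (S \<inter> {x. g x \<noteq> 0}))"
      using cf x False unfolding continuous_on_def by auto
    then show ?thesis using e by simp
  qed
qed

definition wfun :: "pt \<Rightarrow> complex" where "wfun p = fst (snd p) / (fst p - 1)"
definition ar :: "pt \<Rightarrow> real" where "ar p = cF ((cmod (wfun p))^2)"
definition P1 :: "pt \<Rightarrow> complex" where "P1 p = fst p ^ 2 * complex_of_real (ar p) / wfun p"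
definition P2 :: "pt \<Rightarrow> complex" where "P2 p = fst p * complex_of_real (ar p) ^ 2 / wfun p"

definition H0 :: "real \<times> pt \<Rightarrow> pt" where
  "H0 x = (let t = complex_of_real (fst x); p = snd x; a = complex_of_real (ar p);
      A' = (1 - t) * fst p + t * a in
     (A', wfun p * (A' - 1),
      (1 - t)^3 * snd (snd p) + 3 * (1 - t)^2 * t * P1 p + 3 * (1 - t) * t^2 * P2 p
        + t^3 * (cnj (wfun p) * (1 - a))))"

definition zf :: "pt \<Rightarrow> complex" where "zf p = snd (snd p) / fst p ^ 3"
definition br :: "pt \<Rightarrow> real" where "br p = cG ((cmod (zf p))^2)"

definition Hinf :: "real \<times> pt \<Rightarrow> pt" where
  "Hinf x = (let t = complex_of_real (fst x); p = snd x; b = complex_of_real (br p);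
      A' = (1 - t) * fst p + t * b in
     (A', (1 - t) * fst (snd p) - t * cnj (zf p) * b^3, A'^3 * zf p))"

definition H :: "real \<times> pt \<Rightarrow> pt" where
  "H x = (if fst (snd x) \<noteq> 1 then H0 x else Hinf x)"

lemma ar_props: "0 \<le> ar p" "ar p < 1" "ar p ^ 3 = (cmod (wfun p))^2 * (1 - ar p)"
  "ar p ^ 3 \<le> (cmod (wfun p))^2"
  unfolding ar_def
  using cF_nonneg[OF zero_le_power2] cF_lt1[OF zero_le_power2] cF_eq[OF zero_le_power2, of "cmod (wfun p)"]
    cF_cube_le[OF zero_le_power2]
  by (auto simp: algebra_simps)

lemma ar_cube_c: "complex_of_real (ar p) ^ 3 = wfun p * cnj (wfun p) * (1 - complex_of_real (ar p))"
proof -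
  have "complex_of_real (ar p) ^ 3 = complex_of_real ((cmod (wfun p))^2 * (1 - ar p))"
    using ar_props(3)[of p] by (metis of_real_power)
  also have "\<dots> = wfun p * cnj (wfun p) * (1 - complex_of_real (ar p))"
    by (simp only: of_real_mult of_real_diff of_real_1 complex_norm_square)
  finally show ?thesis .
qed

lemma W_A3: assumes "p \<in> W" "fst p \<noteq> 1" shows "fst p ^ 3 = wfun p * snd (snd p)"
proof -
  obtain A B C where p: "p = (A,B,C)" by (cases p) auto
  have e: "A^3 * (A - 1) = B * C" and A1: "A - 1 \<noteq> 0" using assms p by (auto simp: W_def)
  have "wfun p * snd (snd p) = B * C / (A - 1)" using p by (simp add: wfun_def)
  also have "\<dots> = A^3" using e A1 by (simp add: field_simps)
  finally show ?thesis using p by simp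
qed

lemma w0_A0: assumes "p \<in> W" "fst p \<noteq> 1" "wfun p = 0" shows "fst p = 0" "fst (snd p) = 0" "ar p = 0"
proof -
  show "fst p = 0" using W_A3[OF assms(1,2)] assms(3) by simp
  show "fst (snd p) = 0" using assms(2,3) by (auto simp: wfun_def)
  show "ar p = 0" using assms(3) by (simp add: ar_def)
qed

lemma cubic_expand: "((1 - t) * A + t * a)^3 =
   (1 - t)^3 * A^3 + 3 * (1 - t)^2 * t * (A^2 * a) + 3 * (1 - t) * t^2 * (A * a^2) + t^3 * a^3"
  for t A a :: complex
  by (simp add: algebra_simps power2_eq_square power3_eq_cube)

lemma H0_third:
  assumes "p \<in> W" "fst p \<noteq> 1" "wfun p \<noteq> 0"
  shows "snd (snd (H0 (t,p))) = (fst (H0 (t,p)))^3 / wfun p"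
proof -
  define T where "T = complex_of_real t"
  define a where "a = complex_of_real (ar p)"
  define w where "w = wfun p"
  define A where "A = fst p"
  have w: "w \<noteq> 0" using assms(3) w_def by simp
  have C: "snd (snd p) = A^3 / w" using W_A3[OF assms(1,2)] w unfolding A_def w_def by (simp add: field_simps)
  have c3: "cnj w * (1 - a) = a^3 / w" using ar_cube_c[of p] w unfolding a_def w_def by (simp add: field_simps)
  have "snd (snd (H0 (t,p))) = (1 - T)^3 * (A^3 / w) + 3 * (1 - T)^2 * T * (A^2 * a / w)
      + 3 * (1 - T) * T^2 * (A * a^2 / w) + T^3 * (a^3 / w)"
    unfolding H0_def Let_def using C c3 by (simp add: T_def a_def w_def A_def P1_def P2_def)
  also have "\<dots> = ((1 - T)^3 * A^3 + 3 * (1 - T)^2 * T * (A^2 * a) + 3 * (1 - T) * T^2 * (A * a^2) + T^3 * a^3) / w"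
    by (simp add: add_divide_distrib)
  also have "\<dots> = ((1 - T) * A + T * a)^3 / w" by (simp only: cubic_expand)
  also have "\<dots> = (fst (H0 (t,p)))^3 / wfun p" unfolding H0_def Let_def by (simp add: T_def a_def w_def A_def)
  finally show ?thesis .
qed


lemma br_props: "0 \<le> br p" "br p \<le> 1" "(cmod (zf p))^2 * br p ^ 3 + br p - 1 = 0"
  unfolding br_def using cG_range cG_eq[OF zero_le_power2] by auto

lemma br_c: "complex_of_real (br p) ^ 3 * (zf p * cnj (zf p)) = 1 - complex_of_real (br p)"
proof -
  have n: "zf p * cnj (zf p) = complex_of_real ((cmod (zf p))^2)" by (rule complex_norm_square[symmetric])
  have "complex_of_real (br p) ^ 3 * (zf p * cnj (zf p)) = complex_of_real (br p ^ 3 * (cmod (zf p))^2)"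
    unfolding n by simp
  also have "br p ^ 3 * (cmod (zf p))^2 = 1 - br p" using br_props(3)[of p] by (simp add: algebra_simps)
  finally show ?thesis by simp
qed

lemma H0_W: assumes "p \<in> W" "fst p \<noteq> 1" shows "H0 (t,p) \<in> W"
proof (cases "wfun p = 0")
  case True
  note z = w0_A0[OF assms True]
  show ?thesis unfolding H0_def Let_def W_def using z True by simp
next
  case False
  have th: "snd (snd (H0 (t,p))) = (fst (H0 (t,p)))^3 / wfun p" by (rule H0_third[OF assms False])
  have sn: "fst (snd (H0 (t,p))) = wfun p * (fst (H0 (t,p)) - 1)" unfolding H0_def Let_def by simp
  obtain X Y Z where h: "H0 (t,p) = (X,Y,Z)" by (cases "H0 (t,p)") auto
  have "Y * Z = X^3 * (X - 1)" using th sn h False by simp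
  then show ?thesis using h by (simp add: W_def)
qed

lemma Hinf_W: assumes "p \<in> W" "fst p = 1" shows "Hinf (t,p) \<in> W"
proof -
  obtain A B C where p: "p = (A,B,C)" by (cases p) auto
  have A: "A = 1" using assms p by simp
  have BC: "B * C = 0" using assms(1) p A by (simp add: W_def)
  have z: "zf p = C" using p A by (simp add: zf_def)
  define T where "T = complex_of_real t"
  define b where "b = complex_of_real (br p)"
  have bc: "b^3 * (C * cnj C) = 1 - b" using br_c[of p] z unfolding b_def by simp
  define X where "X = (1 - T) * A + T * b"
  have h: "Hinf (t,p) = (X, (1 - T) * B - T * cnj C * b^3, X^3 * C)"
    unfolding Hinf_def Let_def X_def T_def b_def using p z by simp
  have "((1 - T) * B - T * cnj C * b^3) * (X^3 * C) = X^3 * ((1 - T) * (B * C) - T * (b^3 * (C * cnj C)))"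
    by (simp add: algebra_simps)
  also have "\<dots> = X^3 * (X - 1)" unfolding BC bc X_def A by (simp add: algebra_simps)
  finally have eq: "((1 - T) * B - T * cnj C * b^3) * (X^3 * C) = X^3 * (X - 1)" .
  show ?thesis unfolding h W_iff by (rule eq[symmetric])
qed

lemma H_W: assumes "p \<in> W" shows "H (t,p) \<in> W"
  unfolding H_def using H0_W[OF assms] Hinf_W[OF assms] by auto

lemma H_0: "H (0, p) = p"
proof (cases "fst p = 1")
  case False
  obtain A B C where p: "p = (A,B,C)" by (cases p) auto
  have "A - 1 \<noteq> 0" using False p by simp
  then show ?thesis using False p unfolding H_def H0_def Let_def by (simp add: wfun_def)
next
  case True
  obtain A B C where p: "p = (A,B,C)" by (cases p) auto
  then show ?thesis using True p unfolding H_def Hinf_def Let_def by (simp add: zf_def)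
qed

lemma H_1: assumes "p \<in> W" shows "H (1, p) \<in> S2"
proof (cases "fst p = 1")
  case False
  define a where "a = ar p"
  define w where "w = wfun p"
  have a: "0 \<le> a" "a \<le> 1" using ar_props[of p] unfolding a_def by auto
  have h: "H (1, p) = (complex_of_real a, w * (complex_of_real a - 1), cnj w * (1 - complex_of_real a))"
    using False unfolding H_def H0_def Let_def a_def w_def by simp
  have n: "cmod (complex_of_real a - 1) = 1 - a"
  proof -
    have "complex_of_real a - 1 = complex_of_real (a - 1)" by simp
    then show ?thesis using a by (metis norm_of_real abs_of_nonpos diff_le_0_iff_le minus_diff_eq)
  qed
  have "(cmod (w * (complex_of_real a - 1)))^2 = (cmod w)^2 * (1 - a)^2"
    by (simp add: norm_mult n power_mult_distrib)
  also have "\<dots> = a^3 * (1 - a)" using ar_props(3)[of p] unfolding a_def w_def by (simp add: power2_eq_square)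
  finally have B2: "(cmod (w * (complex_of_real a - 1)))^2 = a^3 * (1 - a)" .
  have "- cnj (w * (complex_of_real a - 1)) = cnj w * (1 - complex_of_real a)" by (simp add: algebra_simps)
  then show ?thesis using S2I[OF a B2] h by simp
next
  case True
  define b where "b = br p"
  define z where "z = zf p"
  have b: "0 \<le> b" "b \<le> 1" using br_props[of p] unfolding b_def by auto
  have h: "H (1, p) = (complex_of_real b, - cnj z * complex_of_real b ^ 3, complex_of_real b ^ 3 * z)"
    using True unfolding H_def Hinf_def Let_def b_def z_def by simp
  have "(cmod (- cnj z * complex_of_real b ^ 3))^2 = b^3 * ((cmod z)^2 * b^3)"
    by (simp add: norm_mult norm_power power_mult_distrib abs_of_nonneg b power2_eq_square power3_eq_cube)
  also have "\<dots> = b^3 * (1 - b)"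
  proof -
    have "(cmod z)^2 * b^3 = 1 - b" using br_props(3)[of p] unfolding b_def z_def by linarith
    then show ?thesis by simp
  qed
  finally have B2: "(cmod (- cnj z * complex_of_real b ^ 3))^2 = b^3 * (1 - b)" .
  have "- cnj (- cnj z * complex_of_real b ^ 3) = complex_of_real b ^ 3 * z" by simp
  then show ?thesis using S2I[OF b B2] h by (simp add: mult.commute)
qed

lemma H_fix: assumes "p \<in> S2" shows "H (t, p) = p"
proof (cases "p = N0")
  case True
  then show ?thesis unfolding H_def Hinf_def Let_def by (simp add: N0_def zf_def br_def)
next
  case False
  obtain a B where p: "p = (complex_of_real a, B, - cnj B)" "0 \<le> a" "a \<le> 1" "(cmod B)^2 = a^3 * (1 - a)"
    using assms by (rule S2E)
  have a1: "a \<noteq> 1" using False p by (auto simp: N0_def)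
  have A1: "fst p \<noteq> 1" using a1 p by (simp add: of_real_eq_1_iff)
  have pW: "p \<in> W" using assms S2_sub_W by auto
  have ar: "ar p = a" using a_from_w[OF p(4) a1 p(2,3)] p by (simp add: ar_def wfun_def)
  have ne: "complex_of_real a - 1 \<noteq> 0" using a1 by (metis of_real_eq_1_iff right_minus_eq)
  have Bw: "wfun p * (complex_of_real a - 1) = B" using p ne by (simp add: wfun_def)
  have fstH: "fst (H0 (t,p)) = complex_of_real a" unfolding H0_def Let_def using ar p
    by (simp add: algebra_simps)
  have sndH: "fst (snd (H0 (t,p))) = B" using fstH Bw unfolding H0_def Let_def by (simp add: ar p)
  have thdH: "snd (snd (H0 (t,p))) = - cnj B"
  proof (cases "wfun p = 0")
    case True
    note z = w0_A0[OF pW A1 True]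
    then show ?thesis using True p unfolding H0_def Let_def by (simp add: P1_def P2_def)
  next
    case False
    have "snd (snd (H0 (t,p))) = (complex_of_real a)^3 / wfun p" using H0_third[OF pW A1 False] fstH by simp
    also have "\<dots> = snd (snd p)" using W_A3[OF pW A1] False p by (simp add: field_simps)
    finally show ?thesis using p by simp
  qed
  have "H0 (t,p) = p" using fstH sndH thdH p by (metis prod.collapse fst_conv snd_conv)
  then show ?thesis using A1 unfolding H_def by simp
qed

lemma H_overlap:
  assumes "p \<in> W" "fst p \<noteq> 0" "fst p \<noteq> 1"
  shows "H0 (t,p) = Hinf (t,p)"
proof -
  obtain A B C where p: "p = (A,B,C)" by (cases p) auto
  have e: "A^3 * (A - 1) = B * C" using assms p by (simp add: W_def)
  have A0: "A \<noteq> 0" and A1: "A - 1 \<noteq> 0" using assms p by auto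
  have "A^3 * (A - 1) \<noteq> 0" using A0 A1 by simp
  then have BC: "B * C \<noteq> 0" using e by simp
  define w where "w = wfun p"
  define z where "z = zf p"
  have wz: "w * z = 1" unfolding w_def z_def wfun_def zf_def using p e A0 A1 BC
    by (simp add: field_simps)
  have w0: "w \<noteq> 0" using wz by auto
  have z0: "z \<noteq> 0" using wz by auto
  have nz: "(cmod z)^2 > 0" using z0 by simp
  have "(cmod w)^2 = 1 / (cmod z)^2"
  proof -
    have "cmod w * cmod z = 1" using wz by (metis norm_mult norm_one)
    then show ?thesis using z0 by (simp add: field_simps power2_eq_square)
  qed
  then have bra: "br p = ar p" unfolding br_def ar_def cG_def using nz by (simp add: w_def z_def)
  define T where "T = complex_of_real t"
  define a where "a = complex_of_real (ar p)"
  have a3: "a^3 = w * cnj w * (1 - a)" using ar_cube_c[of p] unfolding a_def w_def .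
  have Bw: "B = w * (A - 1)" using A1 p unfolding w_def wfun_def by simp
  have fstE: "fst (H0 (t,p)) = fst (Hinf (t,p))" unfolding H0_def Hinf_def Let_def using bra by simp
  have "cnj z * a^3 = (cnj z * cnj w) * w * (1 - a)" unfolding a3 by (simp add: algebra_simps)
  also have "cnj z * cnj w = 1" using wz by (metis complex_cnj_mult complex_cnj_one mult.commute)
  finally have za: "cnj z * a^3 = w * (1 - a)" by simp
  have sndE: "fst (snd (H0 (t,p))) = fst (snd (Hinf (t,p)))"
  proof -
    have "fst (snd (H0 (t,p))) = w * ((1 - T) * A + T * a - 1)"
      unfolding H0_def Let_def using p by (simp add: T_def a_def w_def)
    also have "\<dots> = (1 - T) * B - T * (w * (1 - a))" unfolding Bw by (simp add: algebra_simps)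
    also have "\<dots> = (1 - T) * B - T * cnj z * a^3" unfolding za[symmetric] by (simp add: algebra_simps)
    also have "\<dots> = fst (snd (Hinf (t,p)))"
      unfolding Hinf_def Let_def using p bra by (simp add: T_def a_def z_def)
    finally show ?thesis .
  qed
  have thdE: "snd (snd (H0 (t,p))) = snd (snd (Hinf (t,p)))"
  proof -
    have "snd (snd (H0 (t,p))) = (fst (H0 (t,p)))^3 / w"
      using H0_third[OF assms(1,3)] w0 unfolding w_def by simp
    also have "\<dots> = (fst (Hinf (t,p)))^3 * z" using fstE wz w0 by (simp add: field_simps)
    also have "\<dots> = snd (snd (Hinf (t,p)))" unfolding Hinf_def Let_def z_def by simp
    finally show ?thesis .
  qed
  show ?thesis using fstE sndE thdE by (metis prod.collapse)
qed


lemma continuous_on_cF_comp[continuous_intros]: "continuous_on S f \<Longrightarrow> continuous_on S (\<lambda>x. cF (f x))"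
  using continuous_on_compose2[OF continuous_on_cF[of UNIV], of S f] by auto

lemma continuous_on_cG_comp[continuous_intros]: "continuous_on S f \<Longrightarrow> continuous_on S (\<lambda>x. cG (f x))"
  using continuous_on_compose2[OF continuous_on_cG[of UNIV], of S f] by auto

definition U0 :: "pt set" where "U0 = W \<inter> {p. fst p \<noteq> 1}"
definition Ui :: "pt set" where "Ui = W \<inter> {p. fst p \<noteq> 0}"

lemma cont_wfun: "continuous_on U0 wfun"
  unfolding wfun_def U0_def by (intro continuous_intros) auto

lemma cont_wfun': "continuous_on (U0 \<inter> X) wfun"
  using cont_wfun by (rule continuous_on_subset) auto

lemma cont_ar: "continuous_on (U0 \<inter> X) (\<lambda>p. complex_of_real (ar p))"
  unfolding ar_def by (intro continuous_intros cont_wfun')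

lemma root3_bound:
  assumes "q \<ge> 0" "q^3 \<le> R" shows "q \<le> root 3 R"
proof -
  have "root 3 (q^3) \<le> root 3 R" using assms(2) by simp
  then show ?thesis by (simp add: odd_real_root_power_cancel)
qed

lemma P_bounds:
  assumes "p \<in> U0" "wfun p \<noteq> 0"
  shows "(cmod (P1 p))^3 \<le> cmod (wfun p) * (cmod (snd (snd p)))^2"
        "(cmod (P2 p))^3 \<le> (cmod (wfun p))^2 * cmod (snd (snd p))"
proof -
  have pW: "p \<in> W" and A1: "fst p \<noteq> 1" using assms(1) by (auto simp: U0_def)
  define x where "x = cmod (fst p)"
  define y where "y = ar p"
  define m where "m = cmod (wfun p)"
  define c where "c = cmod (snd (snd p))"
  have m: "m > 0" using assms(2) by (simp add: m_def)
  have y: "y \<ge> 0" "y^3 \<le> m^2" using ar_props[of p] by (auto simp: y_def m_def)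
  have x3: "x^3 = m * c" unfolding x_def m_def c_def using W_A3[OF pW A1]
    by (metis norm_mult norm_power)
  have c: "c \<ge> 0" by (simp add: c_def)
  have n1: "cmod (P1 p) = x^2 * y / m" unfolding P1_def x_def y_def m_def
    by (simp add: norm_mult norm_divide norm_power ar_props(1))
  have n2: "cmod (P2 p) = x * y^2 / m" unfolding P2_def x_def y_def m_def
    by (simp add: norm_mult norm_divide norm_power ar_props(1))
  have "(x^2 * y / m)^3 = (x^3)^2 * y^3 / m^3" by (simp add: power_divide power_mult_distrib power_mult[symmetric] mult.commute)
  also have "\<dots> = c^2 * y^3 / m" using m unfolding x3 by (simp add: power2_eq_square power3_eq_cube)
  also have "\<dots> \<le> c^2 * m^2 / m" using y m c by (simp add: divide_right_mono mult_left_mono)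
  also have "\<dots> = m * c^2" using m by (simp add: power2_eq_square)
  finally show "(cmod (P1 p))^3 \<le> cmod (wfun p) * (cmod (snd (snd p)))^2" using n1 by (simp add: m_def c_def)
  have "(x * y^2 / m)^3 = x^3 * (y^3)^2 / m^3" by (simp add: power_divide power_mult_distrib power_mult[symmetric] mult.commute)
  also have "\<dots> = c * (y^3)^2 / m^2" using m unfolding x3 by (simp add: power2_eq_square power3_eq_cube)
  also have "\<dots> \<le> c * (m^2)^2 / m^2"
  proof -
    have "(y^3)^2 \<le> (m^2)^2" by (rule power_mono) (use y in auto)
    then show ?thesis using m c by (simp add: divide_right_mono mult_left_mono)
  qed
  also have "\<dots> = m^2 * c" using m by (simp add: power2_eq_square)
  finally show "(cmod (P2 p))^3 \<le> (cmod (wfun p))^2 * cmod (snd (snd p))" using n2 by (simp add: m_def c_def)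
qed

lemma cont_P1: "continuous_on U0 P1"
proof (rule cont_zero_bound[OF cont_wfun, where h="\<lambda>p. root 3 (cmod (wfun p) * (cmod (snd (snd p)))^2)"])
  show "continuous_on (U0 \<inter> {x. wfun x \<noteq> 0}) P1"
    unfolding P1_def by (intro continuous_intros cont_wfun' cont_ar) auto
  show "continuous_on U0 (\<lambda>p. root 3 (cmod (wfun p) * (cmod (snd (snd p)))^2))"
    by (intro continuous_intros cont_wfun)
  fix x assume x: "x \<in> U0"
  show "cmod (P1 x) \<le> root 3 (cmod (wfun x) * (cmod (snd (snd x)))^2)"
  proof (cases "wfun x = 0")
    case True then show ?thesis by (simp add: P1_def)
  next
    case False then show ?thesis using root3_bound[OF norm_ge_zero P_bounds(1)[OF x False]] by simp
  qed
  show "wfun x = 0 \<Longrightarrow> root 3 (cmod (wfun x) * (cmod (snd (snd x)))^2) = 0 \<and> P1 x = 0"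
    by (simp add: P1_def)
qed

lemma cont_P2: "continuous_on U0 P2"
proof (rule cont_zero_bound[OF cont_wfun, where h="\<lambda>p. root 3 ((cmod (wfun p))^2 * cmod (snd (snd p)))"])
  show "continuous_on (U0 \<inter> {x. wfun x \<noteq> 0}) P2"
    unfolding P2_def by (intro continuous_intros cont_wfun' cont_ar) auto
  show "continuous_on U0 (\<lambda>p. root 3 ((cmod (wfun p))^2 * cmod (snd (snd p))))"
    by (intro continuous_intros cont_wfun)
  fix x assume x: "x \<in> U0"
  show "cmod (P2 x) \<le> root 3 ((cmod (wfun x))^2 * cmod (snd (snd x)))"
  proof (cases "wfun x = 0")
    case True then show ?thesis by (simp add: P2_def)
  next
    case False then show ?thesis using root3_bound[OF norm_ge_zero P_bounds(2)[OF x False]] by simp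
  qed
  show "wfun x = 0 \<Longrightarrow> root 3 ((cmod (wfun x))^2 * cmod (snd (snd x))) = 0 \<and> P2 x = 0"
    by (simp add: P2_def)
qed

lemma comp_snd: "continuous_on U f \<Longrightarrow> continuous_on ({0..1::real} \<times> U) (\<lambda>x. f (snd x))"
  by (rule continuous_on_compose2[of U f _ snd]) (auto intro: continuous_intros)

lemma cont_H0: "continuous_on ({0..1} \<times> U0) H0"
proof -
  define fw where "fw = (\<lambda>x::real \<times> pt. wfun (snd x))"
  define fa where "fa = (\<lambda>x::real \<times> pt. complex_of_real (ar (snd x)))"
  define f1 where "f1 = (\<lambda>x::real \<times> pt. P1 (snd x))"
  define f2 where "f2 = (\<lambda>x::real \<times> pt. P2 (snd x))"
  have w: "continuous_on ({0..1::real} \<times> U0) fw" unfolding fw_def using comp_snd[OF cont_wfun] by simp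
  have a: "continuous_on ({0..1::real} \<times> U0) fa" unfolding fa_def
    by (rule comp_snd) (use cont_ar[of UNIV] in simp)
  have p1: "continuous_on ({0..1::real} \<times> U0) f1" unfolding f1_def using comp_snd[OF cont_P1] by simp
  have p2: "continuous_on ({0..1::real} \<times> U0) f2" unfolding f2_def using comp_snd[OF cont_P2] by simp
  have eq: "H0 = (\<lambda>x. ((1 - complex_of_real (fst x)) * fst (snd x) + complex_of_real (fst x) * fa x,
      fw x * ((1 - complex_of_real (fst x)) * fst (snd x) + complex_of_real (fst x) * fa x - 1),
      (1 - complex_of_real (fst x))^3 * snd (snd (snd x)) + 3 * (1 - complex_of_real (fst x))^2 * complex_of_real (fst x) * f1 x
       + 3 * (1 - complex_of_real (fst x)) * (complex_of_real (fst x))^2 * f2 x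
       + (complex_of_real (fst x))^3 * (cnj (fw x) * (1 - fa x))))"
    unfolding H0_def Let_def fw_def fa_def f1_def f2_def by (simp add: fun_eq_iff)
  show ?thesis unfolding eq
    by (intro continuous_intros w a p1 p2)
qed

lemma cont_zf: "continuous_on Ui zf"
  unfolding zf_def Ui_def by (intro continuous_intros) auto

lemma cont_Hinf: "continuous_on ({0..1} \<times> Ui) Hinf"
proof -
  define fz where "fz = (\<lambda>x::real \<times> pt. zf (snd x))"
  define fb where "fb = (\<lambda>x::real \<times> pt. complex_of_real (br (snd x)))"
  have z: "continuous_on ({0..1::real} \<times> Ui) fz" unfolding fz_def using comp_snd[OF cont_zf] by simp
  have b: "continuous_on ({0..1::real} \<times> Ui) fb" unfolding fb_def
    by (rule comp_snd) (unfold br_def, intro continuous_intros cont_zf)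
  have eq: "Hinf = (\<lambda>x. ((1 - complex_of_real (fst x)) * fst (snd x) + complex_of_real (fst x) * fb x,
     (1 - complex_of_real (fst x)) * fst (snd (snd x)) - complex_of_real (fst x) * cnj (fz x) * (fb x)^3,
     ((1 - complex_of_real (fst x)) * fst (snd x) + complex_of_real (fst x) * fb x)^3 * fz x))"
    unfolding Hinf_def Let_def fz_def fb_def by (simp add: fun_eq_iff)
  show ?thesis unfolding eq
    by (intro continuous_intros z b)
qed

lemma cont_H: "continuous_on ({0..1} \<times> W) H"
proof -
  have un: "{0..1} \<times> W = ({0..1::real} \<times> U0) \<union> ({0..1} \<times> Ui)" unfolding U0_def Ui_def by auto
  have c1: "continuous_on ({0..1::real} \<times> U0) H"
    by (rule continuous_on_eq[OF cont_H0]) (auto simp: H_def U0_def)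
  have c2: "continuous_on ({0..1::real} \<times> Ui) H"
  proof (rule continuous_on_eq[OF cont_Hinf])
    fix x :: "real \<times> pt" assume "x \<in> {0..1} \<times> Ui"
    then obtain t p where x: "x = (t,p)" "p \<in> W" "fst p \<noteq> 0" by (auto simp: Ui_def)
    show "Hinf x = H x"
      using H_overlap[OF x(2,3)] x unfolding H_def by auto
  qed
  have o1: "openin (top_of_set ({0..1} \<times> W)) ({0..1::real} \<times> U0)"
  proof -
    have "{0..1::real} \<times> U0 = ({0..1} \<times> W) \<inter> {x. fst (snd x) \<noteq> 1}" unfolding U0_def by auto
    moreover have "open {x::real \<times> pt. fst (snd x) \<noteq> 1}"
      by (rule open_Collect_neq) (auto intro!: continuous_intros)
    ultimately show ?thesis by (auto simp: openin_open_Int)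
  qed
  have o2: "openin (top_of_set ({0..1} \<times> W)) ({0..1::real} \<times> Ui)"
  proof -
    have "{0..1::real} \<times> Ui = ({0..1} \<times> W) \<inter> {x. fst (snd x) \<noteq> 0}" unfolding Ui_def by auto
    moreover have "open {x::real \<times> pt. fst (snd x) \<noteq> 0}"
      by (rule open_Collect_neq) (auto intro!: continuous_intros)
    ultimately show ?thesis by (auto simp: openin_open_Int)
  qed
  show ?thesis unfolding un by (rule continuous_on_Un_local_open[OF o1[unfolded un] o2[unfolded un] c1 c2])
qed

lemma homot: "homotopic_with (\<lambda>h. \<forall>x\<in>S2. h x = x) (top_of_set W) (top_of_set W) id (\<lambda>x. H (1, x))"
  unfolding homotopic_with_def
proof (intro exI conjI)
  show "continuous_map (prod_topology (top_of_set {0..1}) (top_of_set W)) (top_of_set W) H"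
    using cont_H H_W by (auto simp: continuous_map_subtopology_eu)
  show "\<forall>x. H (0, x) = id x" by (simp add: H_0)
  show "\<forall>x. H (1, x) = H (1, x)" by simp
  show "\<forall>t\<in>{0..1}. \<forall>x\<in>S2. H (t, x) = x" using H_fix by simp
qed

lemma defretract: "deformation_retract_of S2 W"
  unfolding deformation_retract_of_def
proof (intro conjI exI[of _ "\<lambda>x. H (1, x)"])
  show "S2 \<subseteq> W" by (rule S2_sub_W)
  show "(\<lambda>x. H (1, x)) ` W \<subseteq> S2" using H_1 by blast
  show "\<forall>x\<in>S2. H (1, x) = x" using H_fix by blast
  show "homotopic_with (\<lambda>h. \<forall>x\<in>S2. h x = x) (top_of_set W) (top_of_set W) id (\<lambda>x. H (1, x))"
    by (rule homot)
qed

lemma W_heq_S2: "top_of_set W homotopy_equivalent_space top_of_set S2"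
proof (rule deformation_retract_imp_homotopy_equivalent_space)
  have "homotopic_with (\<lambda>x. True) (top_of_set W) (top_of_set W) id (\<lambda>x. H (1, x))"
    by (rule homotopic_with_mono[OF homot]) simp
  then show "homotopic_with (\<lambda>x. True) (top_of_set W) (top_of_set W) (\<lambda>x. H (1, x)) id"
    by (rule homotopic_with_symD)
  have "continuous_map (top_of_set W) (top_of_set W) (\<lambda>x. H (1, x))"
    using homotopic_with_imp_continuous_maps[OF homot] by blast
  then have "continuous_on W (\<lambda>x. H (1, x))" by (simp add: continuous_map_subtopology_eu)
  then have c: "continuous_map (top_of_set W) (top_of_set S2) (\<lambda>x. H (1, x))"
    using H_1 by (auto simp: continuous_map_subtopology_eu)
  have c2: "continuous_map (top_of_set S2) (top_of_set W) id"
    using S2_sub_W by (auto simp: continuous_map_subtopology_eu continuous_on_id)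
  show "retraction_maps (top_of_set W) (top_of_set S2) (\<lambda>x. H (1, x)) id"
    unfolding retraction_maps_def using c c2 H_fix by simp
qed


theorem mainTheorem13:
  shows "top_of_set W homotopy_equivalent_space top_of_set (sphere (0::real^3) 1)
    \<and> holo_to_sphere Phi W
    \<and> Phi ` W = UNIV
    \<and> (\<forall>w. biholo_to_C {p \<in> W. Phi p = w})
    \<and> S2 \<subseteq> W
    \<and> top_of_set S2 homeomorphic_space top_of_set (sphere (0::real^3) 1)
    \<and> deformation_retract_of S2 W
    \<and> homeomorphic_map (top_of_set S2) riemann_sphere Phi"
proof -
  have hs: "top_of_set S2 homeomorphic_space top_of_set (sphere (0::real^3) 1)" by (rule S2_homeo_sphere)
  have he: "top_of_set W homotopy_equivalent_space top_of_set (sphere (0::real^3) 1)"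
    by (rule homotopy_eqv_trans[OF W_heq_S2 homeomorphic_imp_homotopy_equivalent_space[OF hs]])
  show ?thesis using he holo_Phi Phi_surj fibers S2_sub_W hs defretract Phi_homeo by blast
qed

end
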